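(* Let $M(n)$ denote the minimum, over all forcibly connected graphical degree sequences of length $n$, of the largest term of the sequence. Then $M(n)=\Omega(\sqrt{n})$; that is, there is a constant $c>0$ such that $M(n)>c\sqrt{n}$ for all sufficiently large $n$.
   Context: A graphical degree sequence of length $n$ is a non-increasing sequence of non-negative integers $d_1\ge\cdots\ge d_n$ that is the vertex degree sequence of some simple graph (finite, undirected, no loops or multiple edges) on $n$ vertices; such a graph is a realization. A graphical degree sequence is forcibly connected if every one of its realizations is connected. *)

theory Defs
  imports Complex_Main
begin

definition simple_graph_on :: "nat \<Rightarrow> (nat \<Rightarrow> nat \<Rightarrow> bool) \<Rightarrow> bool" where
  "simple_graph_on n E \<longleftrightarrow> (\<forall>i j. E i j \<longrightarrow> i < n \<and> j < n \<and> i \<noteq> j \<and> E j i)"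

definition degree_in :: "nat \<Rightarrow> (nat \<Rightarrow> nat \<Rightarrow> bool) \<Rightarrow> nat \<Rightarrow> nat" where
  "degree_in n E i = card {j. j < n \<and> E i j}"

definition realizes :: "(nat \<Rightarrow> nat \<Rightarrow> bool) \<Rightarrow> nat list \<Rightarrow> bool" where
  "realizes E d \<longleftrightarrow> simple_graph_on (length d) E \<and>
     (\<forall>i < length d. degree_in (length d) E i = d ! i)"

definition graphical :: "nat list \<Rightarrow> bool" where
  "graphical d \<longleftrightarrow> sorted_wrt (\<ge>) d \<and> (\<exists>E. realizes E d)"

definition connected_on :: "nat \<Rightarrow> (nat \<Rightarrow> nat \<Rightarrow> bool) \<Rightarrow> bool" where
  "connected_on n E \<longleftrightarrow> (\<forall>i < n. \<forall>j < n. (i, j) \<in> {(a, b). E a b}\<^sup>*)"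

definition forcibly_connected :: "nat list \<Rightarrow> bool" where
  "forcibly_connected d \<longleftrightarrow> graphical d \<and> (\<forall>E. realizes E d \<longrightarrow> connected_on (length d) E)"

definition M :: "nat \<Rightarrow> nat" where
  "M n = Min {Max (set d) | d. length d = n \<and> forcibly_connected d}"

end

theory Submission
  imports Defs "HOL-Library.Multiset"
begin

definition nb :: "nat \<Rightarrow> (nat\<Rightarrow>nat\<Rightarrow>bool) \<Rightarrow> nat \<Rightarrow> nat set" where
  "nb n E w = {j. j<n \<and> E w j}"
definition cutset :: "nat \<Rightarrow> nat set \<Rightarrow> (nat\<Rightarrow>nat\<Rightarrow>bool) \<Rightarrow> (nat\<times>nat) set" where
  "cutset n A E = {(a,b). a\<in>A \<and> b<n \<and> b\<notin>A \<and> E a b}"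

lemma finite_nb[simp]: "finite (nb n E w)" unfolding nb_def by auto

lemma finite_cut: "A \<subseteq> {..<n} \<Longrightarrow> finite (cutset n A E)"
  unfolding cutset_def
  by (rule finite_subset[of _ "{..<n} \<times> {..<n}"]) auto

lemma even_symrel:
  "finite R \<Longrightarrow> (\<forall>a b. (a,b)\<in>R \<longrightarrow> (b,a)\<in>R \<and> a \<noteq> b) \<Longrightarrow> even (card R)"
proof (induction "card R" arbitrary: R rule: less_induct)
  case less
  show ?case
  proof (cases "R = {}")
    case True then show ?thesis by simp
  next
    case False
    then obtain a b where ab: "(a,b) \<in> R" by auto
    with less.prems have ba: "(b,a) \<in> R" and ne: "a \<noteq> b" by auto
    define R' where "R' = R - {(a,b),(b,a)}"
    have sub: "{(a,b),(b,a)} \<subseteq> R" using ab ba by auto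
    have c2: "card {(a,b),(b,a)} = 2" using ne by auto
    have cR: "card R' = card R - 2" unfolding R'_def
      using card_Diff_subset[OF _ sub] less.prems c2 by (simp add: finite_subset)
    have cge: "card R \<ge> 2" using card_mono[OF less.prems(1) sub] c2 by simp
    have "even (card R')"
      apply (rule less.hyps)
      using cR cge apply simp
      using less.prems unfolding R'_def by auto
    moreover have "card R = card R' + 2" using cR cge by simp
    ultimately show ?thesis by simp
  qed
qed

lemma sum_deg_split:
  assumes "simple_graph_on n E" "X \<subseteq> {..<n}"
  shows "(\<Sum>a\<in>X. card (nb n E a)) = card {(a,j). a\<in>X \<and> j\<in>X \<and> E a j} + card (cutset n X E)"
proof -
  have fX: "finite X" using assms(2) finite_subset by blast
  have "(\<Sum>a\<in>X. card (nb n E a)) = card (Sigma X (nb n E))"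
    using fX by simp
  also have "Sigma X (nb n E) = {(a,j). a\<in>X \<and> j\<in>X \<and> E a j} \<union> cutset n X E"
    using assms unfolding nb_def cutset_def simple_graph_on_def by auto
  also have "card \<dots> = card {(a,j). a\<in>X \<and> j\<in>X \<and> E a j} + card (cutset n X E)"
    apply (rule card_Un_disjoint)
    apply (rule finite_subset[of _ "X \<times> X"]) using fX apply auto[2]
    using finite_cut assms(2) apply blast
    unfolding cutset_def by auto
  finally show ?thesis .
qed

lemma even_internal:
  assumes "simple_graph_on n E" "X \<subseteq> {..<n}"
  shows "even (card {(a,j). a\<in>X \<and> j\<in>X \<and> E a j})"
proof (rule even_symrel)
  have fX: "finite X" using assms(2) finite_subset by blast
  show "finite {(a,j). a\<in>X \<and> j\<in>X \<and> E a j}"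
    by (rule finite_subset[of _ "X \<times> X"]) (use fX in auto)
  show "\<forall>a b. (a, b) \<in> {(a,j). a\<in>X \<and> j\<in>X \<and> E a j} \<longrightarrow> (b, a) \<in> {(a,j). a\<in>X \<and> j\<in>X \<and> E a j} \<and> a \<noteq> b"
    using assms(1) unfolding simple_graph_on_def by auto
qed

lemma cut_parity:
  assumes "simple_graph_on n E" "X \<subseteq> {..<n}"
  shows "even (\<Sum>a\<in>X. card (nb n E a)) \<longleftrightarrow> even (card (cutset n X E))"
  using sum_deg_split[OF assms] even_internal[OF assms] by simp

definition erel :: "(nat\<times>nat) list \<Rightarrow> nat \<Rightarrow> nat \<Rightarrow> bool" where
  "erel es i j \<longleftrightarrow> (i,j) \<in> set es \<or> (j,i) \<in> set es"
definition good :: "(nat\<times>nat) list \<Rightarrow> bool" where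
  "good es \<longleftrightarrow> distinct es \<and> (\<forall>i j. (i,j)\<in>set es \<longrightarrow> i\<noteq>j \<and> (j,i) \<notin> set es)"
definition ends :: "(nat\<times>nat) list \<Rightarrow> nat list" where
  "ends es = concat (map (\<lambda>(i,j). [i,j]) es)"

lemma fin_erel: "finite {j. erel es w j}"
proof (rule finite_subset[of _ "fst ` set es \<union> snd ` set es"])
  show "{j. erel es w j} \<subseteq> fst ` set es \<union> snd ` set es"
  proof
    fix j assume "j \<in> {j. erel es w j}"
    then have "(w,j) \<in> set es \<or> (j,w) \<in> set es" unfolding erel_def by simp
    then show "j \<in> fst ` set es \<union> snd ` set es"
      by (metis UnI1 UnI2 fst_conv snd_conv image_eqI)
  qed
qed simp

lemma erel_cons: "{j. erel ((a,b)#es) w j} = {j. erel es w j} \<union> (if w = a then {b} else {}) \<union> (if w = b then {a} else {})"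
  unfolding erel_def by auto

lemma ends_cons: "count (mset (ends ((a,b)#es))) w = count (mset (ends es)) w + (if w = a then 1 else 0) + (if w = b then 1 else 0)"
  unfolding ends_def by simp

lemma card_erel: "good es \<Longrightarrow> card {j. erel es w j} = count (mset (ends es)) w"
proof (induction es)
  case Nil then show ?case by (simp add: erel_def ends_def)
next
  case (Cons e es)
  obtain a b where e: "e = (a,b)" by (cases e)
  have gd: "distinct (e#es)" and gq: "\<forall>i j. (i,j)\<in>set (e#es) \<longrightarrow> i\<noteq>j \<and> (j,i) \<notin> set (e#es)"
    using Cons.prems unfolding good_def by blast+
  have g: "good es" unfolding good_def
  proof (intro conjI allI impI)
    show "distinct es" using gd by simp
    fix i j assume "(i,j) \<in> set es"
    then have "(i,j) \<in> set (e#es)" by simp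
    then have "i\<noteq>j \<and> (j,i) \<notin> set (e#es)" using gq by blast
    then show "i\<noteq>j" "(j,i) \<notin> set es" by simp_all
  qed
  have ab1: "a \<noteq> b \<and> (b,a) \<notin> set (e#es)" using gq e by simp
  have ab: "a \<noteq> b" "(a,b) \<notin> set es" "(b,a) \<notin> set es" using ab1 gd e by simp_all
  note IH = Cons.IH[OF g]
  show ?case
  proof (cases "w = a")
    case True
    then have nb: "b \<notin> {j. erel es w j}" using ab unfolding erel_def by auto
    have "{j. erel (e#es) w j} = insert b {j. erel es w j}" using True ab(1) unfolding e erel_cons by auto
    then show ?thesis using True ab(1) nb IH fin_erel unfolding e ends_cons by simp
  next
    case F: False
    show ?thesis
    proof (cases "w = b")
      case True
      then have na: "a \<notin> {j. erel es w j}" using ab unfolding erel_def by auto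
      have "{j. erel (e#es) w j} = insert a {j. erel es w j}" using True ab(1) unfolding e erel_cons by auto
      then show ?thesis using True F na IH fin_erel unfolding e ends_cons by simp
    next
      case False
      have "{j. erel (e#es) w j} = {j. erel es w j}" using False F unfolding e erel_cons by auto
      then show ?thesis using F False IH unfolding e ends_cons by simp
    qed
  qed
qed

definition swe :: "(nat\<Rightarrow>nat\<Rightarrow>bool) \<Rightarrow> (nat\<times>nat) list \<Rightarrow> (nat\<times>nat) list \<Rightarrow> nat \<Rightarrow> nat \<Rightarrow> bool" where
  "swe E rem add i j \<longleftrightarrow> (E i j \<and> \<not> erel rem i j) \<or> erel add i j"

lemma card_nb_eq:
  assumes "finite N" "R \<subseteq> N" "Ad \<inter> N = {}" "finite Ad" "card R = card Ad"
  shows "card ((N - R) \<union> Ad) = card N"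
proof -
  have "card ((N - R) \<union> Ad) = card (N - R) + card Ad"
    using assms by (intro card_Un_disjoint) auto
  moreover have "card (N - R) = card N - card R" using assms by (simp add: card_Diff_subset finite_subset)
  moreover have "card R \<le> card N" using assms card_mono by blast
  ultimately show ?thesis using assms by simp
qed

lemma switch_realizes:
  assumes r: "realizes E d" and n: "n = length d"
    and gr: "good rem" and ga: "good add"
    and remE: "\<forall>i j. erel rem i j \<longrightarrow> E i j"
    and addE: "\<forall>i j. erel add i j \<longrightarrow> \<not> E i j \<and> i < n \<and> j < n"
    and ms: "mset (ends rem) = mset (ends add)"
  shows "realizes (swe E rem add) d"
proof -
  have sg: "simple_graph_on n E" using r n unfolding realizes_def by simp
  have symr: "erel es i j \<Longrightarrow> erel es j i" for es i j unfolding erel_def by auto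
  have gq: "\<forall>i j. (i,j)\<in>set add \<longrightarrow> i\<noteq>j" using ga unfolding good_def by blast
  have irr: "\<not> erel add i i" for i using gq unfolding erel_def by blast
  have sg': "simple_graph_on n (swe E rem add)"
    unfolding simple_graph_on_def swe_def
  proof (intro allI impI)
    fix i j assume h: "E i j \<and> \<not> erel rem i j \<or> erel add i j"
    then show "i < n \<and> j < n \<and> i \<noteq> j \<and> (E j i \<and> \<not> erel rem j i \<or> erel add j i)"
    proof
      assume h1: "E i j \<and> \<not> erel rem i j"
      have "i<n \<and> j<n \<and> i\<noteq>j \<and> E j i" using sg h1 unfolding simple_graph_on_def by blast
      moreover have "\<not> erel rem j i" using h1 symr by metis
      ultimately show ?thesis by blast
    next
      assume h2: "erel add i j"
      have "i<n \<and> j<n" using addE h2 by blast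
      moreover have "i \<noteq> j" using irr h2 by metis
      moreover have "erel add j i" using symr h2 by metis
      ultimately show ?thesis by blast
    qed
  qed
  have deg: "card (nb n (swe E rem add) w) = card (nb n E w)" for w
  proof -
    have eq: "nb n (swe E rem add) w = (nb n E w - {j. erel rem w j}) \<union> {j. erel add w j}"
    proof (rule set_eqI)
      fix j
      have "erel add w j \<Longrightarrow> j < n" using addE by blast
      then show "j \<in> nb n (swe E rem add) w \<longleftrightarrow> j \<in> (nb n E w - {j. erel rem w j}) \<union> {j. erel add w j}"
        unfolding nb_def swe_def by blast
    qed
    have s1: "{j. erel rem w j} \<subseteq> nb n E w" unfolding nb_def using remE sg
      unfolding simple_graph_on_def by blast
    have s2: "{j. erel add w j} \<inter> nb n E w = {}" unfolding nb_def using addE by blast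
    have s3: "finite {j. erel add w j}" by (rule finite_subset[of _ "{..<n}"]) (use addE in auto)
    have s4: "card {j. erel rem w j} = card {j. erel add w j}"
      using card_erel[OF gr] card_erel[OF ga] ms by simp
    show ?thesis unfolding eq by (rule card_nb_eq[OF finite_nb s1 s2 s3 s4])
  qed
  show ?thesis using r sg' deg n unfolding realizes_def degree_in_def nb_def by simp
qed

lemma switch_cut:
  assumes addA: "\<forall>i j. erel add i j \<longrightarrow> (i\<in>A \<longleftrightarrow> j\<in>A)"
    and mem: "(a1,b1) \<in> set rem" "(a1,b1) \<in> cutset n A E" and fin: "finite (cutset n A E)"
  shows "card (cutset n A (swe E rem add)) < card (cutset n A E)"
proof -
  have "cutset n A (swe E rem add) \<subseteq> cutset n A E - {(a1,b1)}"
  proof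
    fix p assume "p \<in> cutset n A (swe E rem add)"
    then obtain a b where p: "p = (a,b)" "a \<in> A" "b < n" "b \<notin> A" "swe E rem add a b"
      unfolding cutset_def by blast
    have "\<not> erel add a b" using addA p by blast
    then have "E a b" "\<not> erel rem a b" using p(5) unfolding swe_def by auto
    moreover have "erel rem a1 b1" using mem(1) unfolding erel_def by blast
    ultimately show "p \<in> cutset n A E - {(a1,b1)}" using p unfolding cutset_def by auto
  qed
  also have "\<dots> \<subset> cutset n A E" using mem(2) by auto
  finally show ?thesis using fin psubset_card_mono by blast
qed

lemma find_edge:
  assumes sg: "simple_graph_on n E" and X: "X \<subseteq> {..<n}" and fS: "finite S" and cS: "card S \<le> s"
    and dmax: "\<forall>w. card (nb n E w) \<le> D" and dmin: "\<forall>w<n. card (nb n E w) \<ge> 1"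
    and cX: "card (cutset n X E) \<le> K" and big: "s + s*D + K < card X"
  shows "\<exists>x y. x\<in>X \<and> y\<in>X \<and> x\<notin>S \<and> y\<notin>S \<and> E x y"
proof -
  define C where "C = cutset n X E"
  have fC: "finite C" unfolding C_def using finite_cut[OF X] .
  define Bad where "Bad = S \<union> (\<Union>t\<in>S. nb n E t) \<union> fst ` C"
  have c1: "card (\<Union>t\<in>S. nb n E t) \<le> s * D"
  proof -
    have "card (\<Union>t\<in>S. nb n E t) \<le> (\<Sum>t\<in>S. card (nb n E t))" using fS by (rule card_UN_le)
    also have "\<dots> \<le> card S * D" using dmax sum_bounded_above[of S "\<lambda>t. card (nb n E t)" D] by simp
    also have "\<dots> \<le> s * D" using cS by simp
    finally show ?thesis .
  qed
  have c2: "card (fst ` C) \<le> K" using card_image_le[OF fC, of fst] cX unfolding C_def by simp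
  have fBad: "finite Bad" unfolding Bad_def using fS fC by simp
  have "card Bad \<le> card S + card (\<Union>t\<in>S. nb n E t) + card (fst ` C)"
  proof -
    have "card Bad \<le> card (S \<union> (\<Union>t\<in>S. nb n E t)) + card (fst ` C)"
      unfolding Bad_def by (rule card_Un_le)
    moreover have "card (S \<union> (\<Union>t\<in>S. nb n E t)) \<le> card S + card (\<Union>t\<in>S. nb n E t)"
      by (rule card_Un_le)
    ultimately show ?thesis by linarith
  qed
  then have "card Bad < card X" using cS c1 c2 big by linarith
  then have "\<not> X \<subseteq> Bad"
  proof (intro notI)
    assume "card Bad < card X" "X \<subseteq> Bad"
    then have "card X \<le> card Bad" using card_mono[OF fBad] by blast
    then show False using \<open>card Bad < card X\<close> by simp
  qed
  then obtain x where x: "x \<in> X" "x \<notin> Bad" by blast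
  have xn: "x < n" using x X by blast
  then have "card (nb n E x) \<ge> 1" using dmin by blast
  then have "nb n E x \<noteq> {}" by (intro notI) simp
  then obtain y where y: "y < n" "E x y" unfolding nb_def by blast
  have yX: "y \<in> X"
  proof (rule ccontr)
    assume "y \<notin> X"
    then have "(x,y) \<in> C" unfolding C_def cutset_def using x y by blast
    then have "x \<in> fst ` C" by (metis fst_conv image_eqI)
    then show False using x(2) unfolding Bad_def by blast
  qed
  have yS: "y \<notin> S"
  proof
    assume "y \<in> S"
    moreover have "x \<in> nb n E y" unfolding nb_def using xn y sg unfolding simple_graph_on_def by blast
    ultimately show False using x(2) unfolding Bad_def by blast
  qed
  have "x \<notin> S" using x(2) unfolding Bad_def by blast
  then show ?thesis using x(1) yX yS y(2) by blast
qed

lemma ineq4: "2*(D+1) + 2*(D+1)*D + 2*(D+1)*D < 4*(D+1)*(D+1) + (1::nat)"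
  by (simp add: algebra_simps)

lemma reduce:
  assumes r: "realizes E d" and n: "n = length d" and A: "A \<subseteq> {..<n}"
    and dmax: "\<forall>i<n. d!i \<le> D" and dmin: "\<forall>i<n. d!i \<ge> 1"
    and cA: "4*(D+1)*(D+1) < card A" and cB: "4*(D+1)*(D+1) < card ({..<n} - A)"
    and c2: "card (cutset n A E) \<ge> 2"
  shows "\<exists>E'. realizes E' d \<and> card (cutset n A E') < card (cutset n A E)"
proof -
  have sg: "simple_graph_on n E" using r n unfolding realizes_def by simp
  have sym: "E i j \<Longrightarrow> E j i" for i j using sg unfolding simple_graph_on_def by blast
  have bnd: "E i j \<Longrightarrow> i < n \<and> j < n \<and> i \<noteq> j" for i j using sg unfolding simple_graph_on_def by blast
  have degw: "card (nb n E w) = d!w" if "w < n" for w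
    using r n that unfolding realizes_def degree_in_def nb_def by simp
  have nbe: "nb n E w = {}" if "\<not> w < n" for w using bnd that unfolding nb_def by blast
  have dmaxw: "\<forall>w. card (nb n E w) \<le> D"
  proof
    fix w show "card (nb n E w) \<le> D" using degw dmax nbe by (cases "w < n") auto
  qed
  have dminw: "\<forall>w<n. card (nb n E w) \<ge> 1" using degw dmin by simp
  define C where "C = cutset n A E"
  have fC: "finite C" unfolding C_def using finite_cut[OF A] .
  have Cmem: "(p,q) \<in> C \<longleftrightarrow> p \<in> A \<and> q < n \<and> q \<notin> A \<and> E p q" for p q
    unfolding C_def cutset_def by simp
  have "C \<noteq> {}" using c2 unfolding C_def by auto
  then obtain a1 b1 where ab1: "(a1,b1) \<in> C" by auto
  have ab1': "a1 \<in> A" "b1 \<notin> A" "E a1 b1" "b1 < n" "a1 < n" using ab1 Cmem A by auto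
  have fin_ins: "finite (insert w (nb n E w))" for w by simp
  have card_ins: "card (insert w (nb n E w)) \<le> D + 1" for w
    using card_insert_le_m1 dmaxw by (metis Suc_eq_plus1 card_insert_if finite_nb le_SucI not_less_eq_eq)
  show ?thesis
  proof (cases "\<exists>a2 b2. (a2,b2) \<in> C \<and> a2 \<noteq> a1 \<and> \<not> E a1 a2 \<and> b2 \<noteq> b1 \<and> \<not> E b1 b2")
    case True
    then obtain a2 b2 where ab2: "(a2,b2) \<in> C" "a2 \<noteq> a1" "\<not> E a1 a2" "b2 \<noteq> b1" "\<not> E b1 b2" by blast
    have ab2': "a2 \<in> A" "b2 \<notin> A" "E a2 b2" "b2 < n" "a2 < n" using ab2 Cmem A by auto
    define rem where "rem = [(a1,b1),(a2,b2)]"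
    define add where "add = [(a1,a2),(b1,b2)]"
    have ne: "a1 \<noteq> b1" "a1 \<noteq> b2" "a2 \<noteq> b1" "a2 \<noteq> b2" using ab1' ab2' by auto
    have gr: "good rem" unfolding good_def rem_def using ne ab2 by auto
    have ga: "good add" unfolding good_def add_def using ne ab2 by auto
    have remE: "\<forall>i j. erel rem i j \<longrightarrow> E i j" unfolding erel_def rem_def
      using ab1' ab2' sym by auto
    have addE: "\<forall>i j. erel add i j \<longrightarrow> \<not> E i j \<and> i < n \<and> j < n" unfolding erel_def add_def
      using ab1' ab2' ab2 sym by auto
    have ms: "mset (ends rem) = mset (ends add)" unfolding ends_def rem_def add_def
      by (simp add: add_mset_commute)
    have addA: "\<forall>i j. erel add i j \<longrightarrow> (i\<in>A \<longleftrightarrow> j\<in>A)" unfolding erel_def add_def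
      using ab1' ab2' by auto
    have "realizes (swe E rem add) d" by (rule switch_realizes[OF r n gr ga remE addE ms])
    moreover have "card (cutset n A (swe E rem add)) < card (cutset n A E)"
      by (rule switch_cut[OF addA _ _ finite_cut[OF A], of a1 b1]) (use ab1 C_def rem_def in auto)
    ultimately show ?thesis by blast
  next
    case False
    then have H: "\<And>a2 b2. (a2,b2) \<in> C \<Longrightarrow> a2 = a1 \<or> E a1 a2 \<or> b2 = b1 \<or> E b1 b2" by blast
    define N1 where "N1 = insert a1 (nb n E a1)"
    define M1 where "M1 = insert b1 (nb n E b1)"
    have sub: "C \<subseteq> Sigma N1 (nb n E) \<union> (\<lambda>(q,p). (p,q)) ` Sigma M1 (nb n E)"
    proof
      fix c assume c: "c \<in> C"
      obtain p q where pq: "c = (p,q)" by (cases c)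
      have pq': "p \<in> A" "q < n" "q \<notin> A" "E p q" "p < n" using c pq Cmem A by auto
      have "p = a1 \<or> E a1 p \<or> q = b1 \<or> E b1 q" using H c pq by blast
      then show "c \<in> Sigma N1 (nb n E) \<union> (\<lambda>(q,p). (p,q)) ` Sigma M1 (nb n E)"
      proof (elim disjE)
        assume "p = a1" then show ?thesis using pq pq' unfolding N1_def nb_def by auto
      next
        assume "E a1 p" then show ?thesis using pq pq' unfolding N1_def nb_def by auto
      next
        assume h: "q = b1"
        have "(q,p) \<in> Sigma M1 (nb n E)" using h pq' sym unfolding M1_def nb_def by auto
        then show ?thesis using pq by force
      next
        assume h: "E b1 q"
        have "(q,p) \<in> Sigma M1 (nb n E)" using h pq' sym unfolding M1_def nb_def by auto
        then show ?thesis using pq by force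
      qed
    qed
    have cS: "card (Sigma W (nb n E)) \<le> card W * D" if "finite W" for W
    proof -
      have "card (Sigma W (nb n E)) = (\<Sum>t\<in>W. card (nb n E t))" using that by simp
      also have "\<dots> \<le> card W * D" using dmaxw sum_bounded_above[of W "\<lambda>t. card (nb n E t)" D] by simp
      finally show ?thesis .
    qed
    have cN1: "card (Sigma N1 (nb n E)) \<le> (D+1)*D"
      using cS[of N1] card_ins[of a1] unfolding N1_def by (meson fin_ins le_trans mult_le_mono1)
    have cM1: "card ((\<lambda>(q,p). (p,q)) ` Sigma M1 (nb n E)) \<le> (D+1)*D"
    proof -
      have "card ((\<lambda>(q,p). (p,q)) ` Sigma M1 (nb n E)) \<le> card (Sigma M1 (nb n E))"
        by (rule card_image_le) (simp add: M1_def)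
      also have "\<dots> \<le> (D+1)*D"
        using cS[of M1] card_ins[of b1] unfolding M1_def by (meson fin_ins le_trans mult_le_mono1)
      finally show ?thesis .
    qed
    have cC: "card C \<le> 2*(D+1)*D"
    proof -
      have "card C \<le> card (Sigma N1 (nb n E) \<union> (\<lambda>(q,p). (p,q)) ` Sigma M1 (nb n E))"
        by (rule card_mono[OF _ sub]) (simp add: N1_def M1_def)
      also have "\<dots> \<le> card (Sigma N1 (nb n E)) + card ((\<lambda>(q,p). (p,q)) ` Sigma M1 (nb n E))"
        by (rule card_Un_le)
      finally show ?thesis using cN1 cM1 by linarith
    qed
    have "card (C - {(a1,b1)}) \<ge> 1" using c2 ab1 fC unfolding C_def by (simp add: card_Diff_singleton)
    then have "C - {(a1,b1)} \<noteq> {}" by (intro notI) simp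
    then obtain a2 b2 where ab2: "(a2,b2) \<in> C" "(a2,b2) \<noteq> (a1,b1)" by auto
    have ab2': "a2 \<in> A" "b2 \<notin> A" "E a2 b2" "b2 < n" "a2 < n" using ab2 Cmem A by auto
    define S where "S = insert a1 (nb n E a1) \<union> insert a2 (nb n E a2)"
    have cSS: "card S \<le> 2*(D+1)"
      using card_Un_le[of "insert a1 (nb n E a1)" "insert a2 (nb n E a2)"] card_ins[of a1] card_ins[of a2]
      unfolding S_def mult_2 by linarith
    have fS: "finite S" unfolding S_def by simp
    have big: "2*(D+1) + 2*(D+1)*D + 2*(D+1)*D < card A" using cA ineq4[of D] by linarith
    obtain x y where xy: "x\<in>A" "y\<in>A" "x\<notin>S" "y\<notin>S" "E x y"
      using find_edge[OF sg A fS cSS dmaxw dminw _ big] cC unfolding C_def by blast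
    define B where "B = {..<n} - A"
    have B: "B \<subseteq> {..<n}" unfolding B_def by blast
    have cutB: "cutset n B E \<subseteq> (\<lambda>(p,q). (q,p)) ` C"
    proof
      fix c assume c: "c \<in> cutset n B E"
      obtain p q where pq: "c = (p,q)" by (cases c)
      have "(q,p) \<in> C" using c pq sym unfolding cutset_def B_def Cmem by auto
      then show "c \<in> (\<lambda>(p,q). (q,p)) ` C" using pq by force
    qed
    have cCB: "card (cutset n B E) \<le> 2*(D+1)*D"
    proof -
      have "card (cutset n B E) \<le> card ((\<lambda>(p,q). (q,p)) ` C)" by (rule card_mono[OF _ cutB]) (use fC in simp)
      also have "\<dots> \<le> card C" using fC by (rule card_image_le)
      finally show ?thesis using cC by linarith
    qed
    define T where "T = insert b1 (nb n E b1) \<union> insert b2 (nb n E b2)"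
    have cT: "card T \<le> 2*(D+1)"
      using card_Un_le[of "insert b1 (nb n E b1)" "insert b2 (nb n E b2)"] card_ins[of b1] card_ins[of b2]
      unfolding T_def mult_2 by linarith
    have fT: "finite T" unfolding T_def by simp
    have bigB: "2*(D+1) + 2*(D+1)*D + 2*(D+1)*D < card B" using cB ineq4[of D] unfolding B_def by linarith
    obtain u v where uv: "u\<in>B" "v\<in>B" "u\<notin>T" "v\<notin>T" "E u v"
      using find_edge[OF sg B fT cT dmaxw dminw cCB bigB] by blast
    have xyn: "x < n" "y < n" "u < n" "v < n" using xy uv A B by auto
    have uvA: "u \<notin> A" "v \<notin> A" using uv unfolding B_def by auto
    have xS: "x \<noteq> a1" "x \<noteq> a2" "\<not> E a1 x" "\<not> E a2 x" "y \<noteq> a1" "y \<noteq> a2" "\<not> E a1 y" "\<not> E a2 y"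
      using xy xyn unfolding S_def nb_def by auto
    have uT: "u \<noteq> b1" "u \<noteq> b2" "\<not> E b1 u" "\<not> E b2 u" "v \<noteq> b1" "v \<noteq> b2" "\<not> E b1 v" "\<not> E b2 v"
      using uv xyn unfolding T_def nb_def by auto
    have xy_ne: "x \<noteq> y" "u \<noteq> v" using bnd xy(5) uv(5) by auto
    define rem where "rem = [(a1,b1),(a2,b2),(x,y),(u,v)]"
    define add where "add = [(a1,x),(a2,y),(b1,u),(b2,v)]"
    have sides: "a1 \<in> A" "a2 \<in> A" "x \<in> A" "y \<in> A" "b1 \<notin> A" "b2 \<notin> A" "u \<notin> A" "v \<notin> A"
      using ab1' ab2' xy uvA by auto
    have gr: "good rem" unfolding good_def rem_def
    proof (intro conjI allI impI)
      show "distinct [(a1,b1),(a2,b2),(x,y),(u,v)]" using sides ab2(2) by auto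
      fix i j assume "(i,j) \<in> set [(a1,b1),(a2,b2),(x,y),(u,v)]"
      then show "i \<noteq> j" "(j,i) \<notin> set [(a1,b1),(a2,b2),(x,y),(u,v)]"
        using sides xy_ne by auto
    qed
    have ga: "good add" unfolding good_def add_def
    proof (intro conjI allI impI)
      show "distinct [(a1,x),(a2,y),(b1,u),(b2,v)]" using sides xy_ne by auto
      fix i j assume "(i,j) \<in> set [(a1,x),(a2,y),(b1,u),(b2,v)]"
      then show "i \<noteq> j" "(j,i) \<notin> set [(a1,x),(a2,y),(b1,u),(b2,v)]"
        using sides xS uT by auto
    qed
    have remE: "\<forall>i j. erel rem i j \<longrightarrow> E i j" unfolding erel_def rem_def
      using ab1' ab2' xy uv sym by auto
    have addE: "\<forall>i j. erel add i j \<longrightarrow> \<not> E i j \<and> i < n \<and> j < n" unfolding erel_def add_def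
      using ab1' ab2' xyn xS uT sym by auto
    have ms: "mset (ends rem) = mset (ends add)" unfolding ends_def rem_def add_def
      by (simp add: add_mset_commute)
    have addA: "\<forall>i j. erel add i j \<longrightarrow> (i\<in>A \<longleftrightarrow> j\<in>A)" unfolding erel_def add_def
      using sides by auto
    have "realizes (swe E rem add) d" by (rule switch_realizes[OF r n gr ga remE addE ms])
    moreover have "card (cutset n A (swe E rem add)) < card (cutset n A E)"
      by (rule switch_cut[OF addA _ _ finite_cut[OF A], of a1 b1]) (use ab1 C_def rem_def in auto)
    ultimately show ?thesis by blast
  qed
qed

lemma rtrancl_closed:
  assumes "(a,b) \<in> {(x,y). E x y}\<^sup>*" "a \<in> A" "\<forall>x y. x \<in> A \<longrightarrow> E x y \<longrightarrow> y \<in> A"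
  shows "b \<in> A"
  using assms(1,2)
proof (induction rule: rtrancl_induct)
  case base then show ?case .
next
  case (step y z) then show ?case using assms(3) by blast
qed

lemma disconnected:
  assumes g: "graphical d" and n: "n = length d" and dmax: "\<forall>i<n. d!i \<le> D"
    and big: "64*(D+1)*(D+1) < n"
  shows "\<not> forcibly_connected d"
proof -
  obtain E0 where r0: "realizes E0 d" using g unfolding graphical_def by blast
  have deg: "card (nb n E w) = d!w" if "realizes E d" "w < n" for E w
    using n that unfolding realizes_def degree_in_def nb_def by simp
  have sgE: "simple_graph_on n E" if "realizes E d" for E using that n unfolding realizes_def by simp
  have n2: "n \<ge> 2" using big by simp
  show ?thesis
  proof (cases "\<exists>z<n. d!z = 0")
    case True
    then obtain z where z: "z < n" "d!z = 0" by blast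
    define w where "w = (if z = 0 then 1 else 0::nat)"
    have w: "w < n" "w \<noteq> z" unfolding w_def using n2 by auto
    have e: "nb n E0 z = {}" using deg[OF r0 z(1)] z(2) by simp
    have "\<not> connected_on n E0"
    proof
      assume "connected_on n E0"
      then have "(z,w) \<in> {(a,b). E0 a b}\<^sup>*" using z w unfolding connected_on_def by blast
      then show False
      proof (cases rule: converse_rtranclE)
        case base then show False using w by simp
      next
        case (step y)
        then have "E0 z y" by simp
        then have "y \<in> nb n E0 z" using sgE[OF r0] unfolding nb_def simple_graph_on_def by blast
        then show False using e by simp
      qed
    qed
    then show ?thesis using r0 n unfolding forcibly_connected_def by blast
  next
    case False
    then have dmin: "\<forall>i<n. d!i \<ge> 1" by (simp add: Suc_le_eq)
    define K where "K = n div 2"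
    have sumdeg: "(\<Sum>i\<in>X. d!i) = (\<Sum>i\<in>X. card (nb n E i))" if "realizes E d" "X \<subseteq> {..<n}" for E X
      using deg[OF that(1)] that(2) by (intro sum.cong) auto
    have evtot: "even (\<Sum>i\<in>{..<n}. d!i)"
    proof -
      have "cutset n {..<n} E0 = {}" unfolding cutset_def by auto
      then show ?thesis using cut_parity[OF sgE[OF r0], of "{..<n}"] sumdeg[OF r0, of "{..<n}"] by simp
    qed
    obtain A where A: "A \<subseteq> {..<n}" "even (\<Sum>i\<in>A. d!i)" "card A \<ge> K" "card A \<le> K + 1"
    proof (cases "even (\<Sum>i\<in>{..<K}. d!i)")
      case True
      show ?thesis by (rule that[of "{..<K}"]) (use True K_def in auto)
    next
      case odd: False
      have split: "(\<Sum>i\<in>{..<n}. d!i) = (\<Sum>i\<in>{..<K}. d!i) + (\<Sum>i\<in>{K..<n}. d!i)"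
      proof -
        have "K \<le> n" unfolding K_def by simp
        then show ?thesis by (simp add: lessThan_atLeast0 sum.atLeastLessThan_concat)
      qed
      have "odd (\<Sum>i\<in>{K..<n}. d!i)" using split evtot odd by simp
      then obtain j where j: "j \<in> {K..<n}" "odd (d!j)"
        by (metis dvd_sum)
      have "(\<Sum>i\<in>insert j {..<K}. d!i) = d!j + (\<Sum>i\<in>{..<K}. d!i)"
        using j by (simp add: sum.insert)
      then have ev: "even (\<Sum>i\<in>insert j {..<K}. d!i)" using j odd by simp
      show ?thesis by (rule that[of "insert j {..<K}"]) (use j ev K_def in auto)
    qed
    define B where "B = {..<n} - A"
    have cB: "card B = n - card A" unfolding B_def using A(1) card_Diff_subset[of A "{..<n}"] finite_subset[OF A(1)] by simp
    define q where "q = (D+1)*(D+1)"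
    have q: "4*(D+1)*(D+1) = 4*q" "64*(D+1)*(D+1) = 64*q" "q \<ge> 1" unfolding q_def by (simp_all add: algebra_simps)
    have nd: "n \<le> 2*(n div 2) + 1" "2*(n div 2) \<le> n" by linarith+
    have cA4: "4*(D+1)*(D+1) < card A" using A(3) big q(3) nd unfolding K_def q by linarith
    have cB4: "4*(D+1)*(D+1) < card B" using A(4) big cB q(3) nd unfolding K_def q by linarith
    have evcut: "even (card (cutset n A E))" if "realizes E d" for E
      using cut_parity[OF sgE[OF that] A(1)] sumdeg[OF that A(1)] A(2) by simp
    define P where "P k \<longleftrightarrow> (\<exists>E. realizes E d \<and> card (cutset n A E) = k)" for k
    have "P (card (cutset n A E0))" unfolding P_def using r0 by blast
    then have PL: "P (Least P)" by (rule LeastI)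
    then obtain E where rE: "realizes E d" and cE: "card (cutset n A E) = Least P" unfolding P_def by blast
    have c0: "card (cutset n A E) = 0"
    proof (rule ccontr)
      assume "card (cutset n A E) \<noteq> 0"
      then have "card (cutset n A E) \<ge> 2" using evcut[OF rE] by (auto elim!: evenE)
      then obtain E' where E': "realizes E' d" "card (cutset n A E') < card (cutset n A E)"
        using reduce[OF rE n A(1) dmax dmin cA4 cB4[unfolded B_def]] by blast
      have "P (card (cutset n A E'))" unfolding P_def using E'(1) by blast
      moreover have "card (cutset n A E') < Least P" using E'(2) cE by simp
      ultimately show False using not_less_Least by blast
    qed
    then have cut0: "cutset n A E = {}" using finite_cut[OF A(1)] by simp
    have "A \<noteq> {}" using cA4 by auto
    then obtain a where a: "a \<in> A" by blast
    have "B \<noteq> {}" using cB4 by auto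
    then obtain b where b: "b \<in> B" by blast
    have clos: "\<forall>x y. x \<in> A \<longrightarrow> E x y \<longrightarrow> y \<in> A"
    proof (intro allI impI)
      fix x y assume "x \<in> A" "E x y"
      moreover have "y < n" using sgE[OF rE] \<open>E x y\<close> unfolding simple_graph_on_def by blast
      ultimately show "y \<in> A" using cut0 unfolding cutset_def by blast
    qed
    have "\<not> connected_on n E"
    proof
      assume "connected_on n E"
      then have "(a,b) \<in> {(x,y). E x y}\<^sup>*" using a b A(1) unfolding connected_on_def B_def by blast
      then have "b \<in> A" using rtrancl_closed a clos by metis
      then show False using b unfolding B_def by blast
    qed
    then show ?thesis using rE n unfolding forcibly_connected_def by blast
  qed
qed

lemma complete_fc:
  assumes n: "n \<ge> 2"
  shows "forcibly_connected (replicate n (n-1))"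
proof -
  define d where "d = replicate n (n-1)"
  define EK where "EK i j \<longleftrightarrow> i<n \<and> j<n \<and> i\<noteq>j" for i j
  have setK: "{j. j < n \<and> EK i j} = {..<n} - {i}" if "i < n" for i unfolding EK_def using that by auto
  have rK: "realizes EK d"
    unfolding realizes_def
  proof
    show "simple_graph_on (length d) EK" unfolding simple_graph_on_def d_def EK_def by auto
    show "\<forall>i<length d. degree_in (length d) EK i = d ! i"
    proof (intro allI impI)
      fix i assume "i < length d"
      then have i: "i < n" unfolding d_def by simp
      have "degree_in (length d) EK i = card ({..<n} - {i})" unfolding degree_in_def d_def
        using setK[OF i] by simp
      also have "\<dots> = n - 1" using i by simp
      finally show "degree_in (length d) EK i = d ! i" using i unfolding d_def by simp
    qed
  qed
  have sorted: "sorted_wrt (\<ge>) d" unfolding d_def by (simp add: sorted_wrt_iff_nth_less)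
  have conn: "connected_on n E" if r: "realizes E d" for E
  proof -
    have sg: "simple_graph_on n E" using r unfolding realizes_def d_def by simp
    have adj: "E i j" if ij: "i < n" "j < n" "i \<noteq> j" for i j
    proof -
      have sub: "{j. j < n \<and> E i j} \<subseteq> {..<n} - {i}" using sg unfolding simple_graph_on_def by auto
      have "card {j. j < n \<and> E i j} = n - 1" using r ij unfolding realizes_def d_def degree_in_def by simp
      moreover have "card ({..<n} - {i}) = n - 1" using ij by simp
      ultimately have "{j. j < n \<and> E i j} = {..<n} - {i}" using sub by (intro card_subset_eq) auto
      then show ?thesis using ij by auto
    qed
    show ?thesis unfolding connected_on_def
    proof (intro allI impI)
      fix i j assume "i < n" "j < n"
      then show "(i, j) \<in> {(a, b). E a b}\<^sup>*"
        using adj by (cases "i = j") (auto intro: r_into_rtrancl)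
    qed
  qed
  show ?thesis unfolding forcibly_connected_def graphical_def d_def[symmetric]
    using sorted rK conn unfolding d_def by auto
qed

lemma M_lower:
  assumes n: "n \<ge> 2"
  shows "n \<le> 64 * (M n + 1) * (M n + 1)"
proof -
  define S where "S = {Max (set d) |d. length d = n \<and> forcibly_connected d}"
  have "Max (set (replicate n (n-1))) \<in> S" unfolding S_def
    apply (rule CollectI)
    apply (rule exI[of _ "replicate n (n-1)"])
    using complete_fc[OF n] by simp
  then have ne: "S \<noteq> {}" by blast
  have bnd: "S \<subseteq> {..n}"
  proof
    fix m assume "m \<in> S"
    then obtain d where d: "m = Max (set d)" "length d = n" "forcibly_connected d" unfolding S_def by blast
    have "d \<noteq> []" using d(2) n by auto
    then have "m \<in> set d" using d(1) by simp
    then obtain i where i: "i < n" "d!i = m" using d(2) by (metis in_set_conv_nth)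
    obtain E where "realizes E d" using d(3) unfolding forcibly_connected_def graphical_def by blast
    then have "m = card {j. j < n \<and> E i j}" using i d(2) unfolding realizes_def degree_in_def by simp
    also have "\<dots> \<le> card {..<n}" by (rule card_mono) auto
    finally show "m \<in> {..n}" by simp
  qed
  have "finite S" using bnd finite_subset by blast
  then have "M n \<in> S" unfolding M_def S_def[symmetric] using ne by simp
  then obtain d where d: "M n = Max (set d)" "length d = n" "forcibly_connected d" unfolding S_def by blast
  have dmax: "\<forall>i<n. d!i \<le> M n" using d by simp
  have "graphical d" using d(3) unfolding forcibly_connected_def by simp
  then have "\<not> 64*(M n+1)*(M n+1) < n" using disconnected[OF _ d(2)[symmetric] dmax] d(3) by blast
  then show ?thesis by simp
qed

theorem theorem1:
  shows "\<exists>c > 0. \<exists>N. \<forall>n \<ge> N. real (M n) > c * sqrt (real n)"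
proof (intro exI[of _ "1/16"] conjI exI[of _ 257] allI impI)
  show "(0::real) < 1/16" by simp
  fix n :: nat assume n: "257 \<le> n"
  have le: "real n \<le> (8 * (real (M n) + 1))^2"
  proof -
    have "real n \<le> real (64 * (M n + 1) * (M n + 1))" using M_lower[of n] n by (simp only: of_nat_le_iff)
    also have "\<dots> = (8 * (real (M n) + 1))^2" by (simp add: power2_eq_square algebra_simps)
    finally show ?thesis .
  qed
  have s1: "sqrt (real n) \<le> 8 * (real (M n) + 1)"
    using real_sqrt_le_mono[OF le] by simp
  have "sqrt 256 < sqrt (real n)" by (rule real_sqrt_less_mono) (use n in simp)
  moreover have "sqrt 256 = (16::real)" by (rule real_sqrt_unique) simp_all
  ultimately have s2: "16 < sqrt (real n)" by simp
  define t where "t = sqrt (real n)"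
  define m where "m = real (M n)"
  have "t \<le> 8 * m + 8" "16 < t" using s1 s2 unfolding t_def m_def by simp_all
  then have "t < 16 * m" by linarith
  then show "1/16 * sqrt (real n) < real (M n)" unfolding t_def m_def by simp
qed

end
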